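(* Let $D' \in \mathrm{Sym}_n(\mathbb{R}_{\geq 0})$ and let $D^A$ be the all pairs shortest path matrix of the complete weighted graph $K_n(D')$. Then for every entrywise $\ell_p$ norm, $D^A$ is a solution of \[\operatorname{argmin}\{\|D-D'\|_p : D \text{ metric},\ D \preceq D'\}.\] In particular (taking $p=1$), $D^A$ is the minimal $\ell_1$ norm decrease only metric repair. *)

theory Defs
  imports Complex_Main
begin

text \<open>Matrices indexed by a finite type 'n (the vertex set {1..n} of K_n).\<close>

definition sym_nonneg :: "('n \<Rightarrow> 'n \<Rightarrow> real) \<Rightarrow> bool" where
  "sym_nonneg D \<longleftrightarrow> (\<forall>i j. D i j = D j i \<and> 0 \<le> D i j)"

text \<open>Metric matrix (zero distances between distinct points allowed).\<close>
definition is_metric :: "('n \<Rightarrow> 'n \<Rightarrow> real) \<Rightarrow> bool" where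
  "is_metric D \<longleftrightarrow> (\<forall>i j. 0 \<le> D i j \<and> D i j = D j i) \<and> (\<forall>i. D i i = 0)
     \<and> (\<forall>i j k. D i k \<le> D i j + D j k)"

definition entry_le :: "('n \<Rightarrow> 'n \<Rightarrow> real) \<Rightarrow> ('n \<Rightarrow> 'n \<Rightarrow> real) \<Rightarrow> bool" where
  "entry_le D E \<longleftrightarrow> (\<forall>i j. D i j \<le> E i j)"

text \<open>Weight of a walk (list of vertices) in the complete weighted graph K_n(D).\<close>
fun walk_weight :: "('n \<Rightarrow> 'n \<Rightarrow> real) \<Rightarrow> 'n list \<Rightarrow> real" where
  "walk_weight D (x # y # xs) = D x y + walk_weight D (y # xs)"
| "walk_weight D _ = 0"

definition apsp :: "('n \<Rightarrow> 'n \<Rightarrow> real) \<Rightarrow> 'n \<Rightarrow> 'n \<Rightarrow> real" where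
  "apsp D i j = Inf {walk_weight D ps | ps. ps \<noteq> [] \<and> hd ps = i \<and> last ps = j}"

definition lp_norm :: "real \<Rightarrow> ('n::finite \<Rightarrow> 'n \<Rightarrow> real) \<Rightarrow> real" where
  "lp_norm p M = (\<Sum>i\<in>UNIV. \<Sum>j\<in>UNIV. \<bar>M i j\<bar> powr p) powr (1 / p)"

definition linf_norm :: "('n::finite \<Rightarrow> 'n \<Rightarrow> real) \<Rightarrow> real" where
  "linf_norm M = Max {\<bar>M i j\<bar> | i j. True}"

end

theory Submission
  imports Defs
begin

lemma ww_nonneg: "(\<And>i j. 0 \<le> D i j) \<Longrightarrow> 0 \<le> walk_weight D ps"
  by (induction D ps rule: walk_weight.induct) (auto intro: add_nonneg_nonneg)

lemma ww_append: "xs \<noteq> [] \<Longrightarrow> ys \<noteq> [] \<Longrightarrow>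
  walk_weight D (xs @ ys) = walk_weight D xs + D (last xs) (hd ys) + walk_weight D ys"
proof (induction xs)
  case Nil then show ?case by simp
next
  case (Cons x xs)
  show ?case
  proof (cases xs)
    case Nil then show ?thesis using Cons by (cases ys) auto
  next
    case (Cons y zs)
    then show ?thesis using Cons.IH Cons.prems by auto
  qed
qed

lemma ww_concat: "p \<noteq> [] \<Longrightarrow> q \<noteq> [] \<Longrightarrow> last p = hd q \<Longrightarrow>
  walk_weight D (p @ tl q) = walk_weight D p + walk_weight D q"
proof (cases q)
  case (Cons y ys)
  assume a: "p \<noteq> []" "last p = hd q"
  show ?thesis
  proof (cases ys)
    case Nil then show ?thesis using Cons by simp
  next
    case (Cons z zs)
    then show ?thesis using \<open>q = y # ys\<close> a ww_append[of p ys D] by auto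
  qed
qed simp

lemma ww_rev: "(\<And>i j. D i j = D j i) \<Longrightarrow> walk_weight D (rev ps) = walk_weight D ps"
proof (induction D ps rule: walk_weight.induct)
  case (1 D x y xs)
  have IH: "walk_weight D (rev (y # xs)) = walk_weight D (y # xs)" using 1 by blast
  have "walk_weight D (rev (x # y # xs)) = walk_weight D (rev (y # xs) @ [x])" by simp
  also have "\<dots> = walk_weight D (rev (y # xs)) + D (last (rev (y # xs))) x"
    by (subst ww_append) auto
  also have "\<dots> = walk_weight D (y # xs) + D y x" using IH by (simp add: last_rev)
  also have "\<dots> = walk_weight D (x # y # xs)" using 1(2)[of x y] by simp
  finally show ?case .
qed auto

lemma ww_metric: "is_metric D \<Longrightarrow> ps \<noteq> [] \<Longrightarrow> D (hd ps) (last ps) \<le> walk_weight D ps"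
proof (induction D ps rule: walk_weight.induct)
  case (1 D x y xs)
  then have "D y (last (y # xs)) \<le> walk_weight D (y # xs)" by simp
  moreover have "D x (last (y#xs)) \<le> D x y + D y (last (y#xs))"
    using 1(2) unfolding is_metric_def by blast
  ultimately show ?case by simp
next
  case ("2_1" D) then show ?case by simp
next
  case ("2_2" D v) then show ?case unfolding is_metric_def by simp
qed

lemma ww_mono: "(\<And>i j. D i j \<le> E i j) \<Longrightarrow> walk_weight D ps \<le> walk_weight E ps"
  by (induction D ps rule: walk_weight.induct) (auto intro: add_mono)

definition WS where "WS D i j = {walk_weight D ps | ps. ps \<noteq> [] \<and> hd ps = i \<and> last ps = j}"

lemma apsp_WS: "apsp D i j = Inf (WS D i j)" unfolding apsp_def WS_def by simp

lemma WS_ne': "walk_weight D [i,j] \<in> WS D i j"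
  unfolding WS_def by (intro CollectI exI[of _ "[i,j]"]) simp

lemma WS_bdd: "sym_nonneg D \<Longrightarrow> bdd_below (WS D i j)"
  unfolding WS_def bdd_below_def sym_nonneg_def
  by (rule exI[of _ 0]) (auto intro: ww_nonneg)

lemma apsp_le: "sym_nonneg D \<Longrightarrow> ps \<noteq> [] \<Longrightarrow> hd ps = i \<Longrightarrow> last ps = j \<Longrightarrow>
   apsp D i j \<le> walk_weight D ps"
proof -
  assume a: "sym_nonneg D" "ps \<noteq> []" "hd ps = i" "last ps = j"
  have "bdd_below (WS D i j)" using a(1) by (rule WS_bdd)
  moreover have "walk_weight D ps \<in> WS D i j" using a unfolding WS_def by blast
  ultimately show ?thesis by (simp add: apsp_WS cInf_lower)
qed

lemma apsp_ge: "(\<And>ps. ps \<noteq> [] \<Longrightarrow> hd ps = i \<Longrightarrow> last ps = j \<Longrightarrow> c \<le> walk_weight D ps)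
   \<Longrightarrow> c \<le> apsp D i j"
  unfolding apsp_WS using WS_ne'[of D i j] by (intro cInf_greatest) (auto simp: WS_def)

lemma apsp_metric:
  assumes s: "sym_nonneg D"
  shows "is_metric (apsp D)"
proof -
  have nn: "\<And>i j. 0 \<le> D i j" and sy: "\<And>i j. D i j = D j i" using s unfolding sym_nonneg_def by auto
  have nonneg: "0 \<le> apsp D i j" for i j by (rule apsp_ge) (simp add: ww_nonneg nn)
  have symm: "apsp D i j \<le> apsp D j i" for i j
  proof (rule apsp_ge)
    fix ps :: "'a list" assume "ps \<noteq> []" "hd ps = j" "last ps = i"
    then have "apsp D i j \<le> walk_weight D (rev ps)"
      by (intro apsp_le[OF s]) (auto simp: hd_rev last_rev)
    then show "apsp D i j \<le> walk_weight D ps" using ww_rev[of D ps] sy by simp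
  qed
  have diag: "apsp D i i = 0" for i
    using apsp_le[OF s, of "[i]" i i] nonneg[of i i] by simp
  have tri: "apsp D i k \<le> apsp D i j + apsp D j k" for i j k
  proof -
    have "apsp D i k - apsp D j k \<le> apsp D i j"
    proof (rule apsp_ge)
      fix p :: "'a list" assume p: "p \<noteq> []" "hd p = i" "last p = j"
      have "apsp D i k - walk_weight D p \<le> apsp D j k"
      proof (rule apsp_ge)
        fix q :: "'a list" assume q: "q \<noteq> []" "hd q = j" "last q = k"
        have "apsp D i k \<le> walk_weight D (p @ tl q)"
        proof (rule apsp_le[OF s])
          show "p @ tl q \<noteq> []" using p by simp
          show "hd (p @ tl q) = i" using p by simp
          show "last (p @ tl q) = k"
          proof (cases "tl q = []")
            case True
            then have "q = [j]" using q by (metis list.collapse)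
            then show ?thesis using p q True by simp
          next
            case False
            then show ?thesis using q by (simp add: last_tl)
          qed
        qed
        also have "\<dots> = walk_weight D p + walk_weight D q"
          using p q by (intro ww_concat) auto
        finally show "apsp D i k - walk_weight D p \<le> walk_weight D q" by simp
      qed
      then show "apsp D i k - apsp D j k \<le> walk_weight D p" by simp
    qed
    then show ?thesis by simp
  qed
  show ?thesis unfolding is_metric_def
  proof (intro conjI allI)
    fix i j k
    show "0 \<le> apsp D i j" by (rule nonneg)
    show "apsp D i j = apsp D j i" using symm[of i j] symm[of j i] by simp
    show "apsp D i i = 0" by (rule diag)
    show "apsp D i k \<le> apsp D i j + apsp D j k" by (rule tri)
  qed
qed

lemma lp_mono:
  assumes "p \<ge> 1" "\<And>i j. \<bar>A i j\<bar> \<le> \<bar>B i j\<bar>"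
  shows "lp_norm p A \<le> lp_norm p (B :: 'n::finite \<Rightarrow> 'n \<Rightarrow> real)"
  unfolding lp_norm_def
proof (rule powr_mono2)
  show "0 \<le> 1/p" using assms by simp
  show "0 \<le> (\<Sum>i\<in>UNIV. \<Sum>j\<in>UNIV. \<bar>A i j\<bar> powr p)" by (intro sum_nonneg) simp
  show "(\<Sum>i\<in>UNIV. \<Sum>j\<in>UNIV. \<bar>A i j\<bar> powr p) \<le> (\<Sum>i\<in>UNIV. \<Sum>j\<in>UNIV. \<bar>B i j\<bar> powr p)"
    using assms by (intro sum_mono powr_mono2) auto
qed

lemma linf_mono:
  assumes "\<And>i j. \<bar>A i j\<bar> \<le> \<bar>B i j\<bar>"
  shows "linf_norm A \<le> linf_norm (B :: 'n::finite \<Rightarrow> 'n \<Rightarrow> real)"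
proof -
  have fin: "finite {\<bar>M i j\<bar> | i j. True}" for M :: "'n \<Rightarrow> 'n \<Rightarrow> real"
  proof -
    have "{\<bar>M i j\<bar> | i j. True} = (\<lambda>(i,j). \<bar>M i j\<bar>) ` UNIV" by auto
    then show ?thesis by simp
  qed
  have ne: "{\<bar>M i j\<bar> | i j. True} \<noteq> {}" for M :: "'n \<Rightarrow> 'n \<Rightarrow> real" by auto
  show ?thesis unfolding linf_norm_def
  proof (subst Max_le_iff[OF fin ne], clarify)
    fix i j
    have "\<bar>B i j\<bar> \<le> Max {\<bar>B i j\<bar> | i j. True}" by (rule Max_ge[OF fin]) auto
    then show "\<bar>A i j\<bar> \<le> Max {\<bar>B i j\<bar> | i j. True}" using assms[of i j] by linarith
  qed
qed

theorem mainTheorem2: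
  fixes D' :: "'n::finite \<Rightarrow> 'n \<Rightarrow> real"
  assumes "sym_nonneg D'"
  shows "is_metric (apsp D') \<and> entry_le (apsp D') D'
    \<and> (\<forall>p::real. p \<ge> 1 \<longrightarrow> (\<forall>D. is_metric D \<and> entry_le D D' \<longrightarrow>
          lp_norm p (\<lambda>i j. apsp D' i j - D' i j) \<le> lp_norm p (\<lambda>i j. D i j - D' i j)))
    \<and> (\<forall>D. is_metric D \<and> entry_le D D' \<longrightarrow>
          linf_norm (\<lambda>i j. apsp D' i j - D' i j) \<le> linf_norm (\<lambda>i j. D i j - D' i j))"
proof -
  have le: "apsp D' i j \<le> D' i j" for i j
    using apsp_le[OF assms, of "[i,j]" i j] by simp
  have key: "\<bar>apsp D' i j - D' i j\<bar> \<le> \<bar>D i j - D' i j\<bar>"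
    if "is_metric D" "entry_le D D'" for D i j
  proof -
    have "D i j \<le> apsp D' i j"
    proof (rule apsp_ge)
      fix ps :: "'n list" assume "ps \<noteq> []" "hd ps = i" "last ps = j"
      then have "D i j \<le> walk_weight D ps" using ww_metric[OF that(1)] by metis
      also have "\<dots> \<le> walk_weight D' ps" using that(2) ww_mono unfolding entry_le_def by metis
      finally show "D i j \<le> walk_weight D' ps" .
    qed
    then show ?thesis using le[of i j] by linarith
  qed
  have A: "\<forall>p::real. p \<ge> 1 \<longrightarrow> (\<forall>D. is_metric D \<and> entry_le D D' \<longrightarrow>
          lp_norm p (\<lambda>i j. apsp D' i j - D' i j) \<le> lp_norm p (\<lambda>i j. D i j - D' i j))"
  proof (intro allI impI, elim conjE)
    fix p :: real and D assume "p \<ge> 1" "is_metric D" "entry_le D D'"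
    then show "lp_norm p (\<lambda>i j. apsp D' i j - D' i j) \<le> lp_norm p (\<lambda>i j. D i j - D' i j)"
      by (intro lp_mono key)
  qed
  have B: "\<forall>D. is_metric D \<and> entry_le D D' \<longrightarrow>
          linf_norm (\<lambda>i j. apsp D' i j - D' i j) \<le> linf_norm (\<lambda>i j. D i j - D' i j)"
  proof (intro allI impI, elim conjE)
    fix D assume "is_metric D" "entry_le D D'"
    then show "linf_norm (\<lambda>i j. apsp D' i j - D' i j) \<le> linf_norm (\<lambda>i j. D i j - D' i j)"
      by (intro linf_mono key)
  qed
  have C: "entry_le (apsp D') D'" unfolding entry_le_def using le by blast
  show ?thesis using apsp_metric[OF assms] A B C by blast
qed

end
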